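(* Consider the following setting. Labels $c$ take values in a finite set $\{1,\ldots,C\}$. For each hyperparameter vector $\lambda=[\lambda^{\rm s},\lambda^{\rm w},\lambda^{\rm d}]$ (with entries in $\mathbb{R}\cup\{\infty\}$), input signal $\mathbf u$ and channel/noise realization $\mathbf h$, the (fixed, pre-trained) wake-up-radio-aided neuromorphic split computing system outputs a decision set $\mathcal C(\mathbf u,\mathbf h,\lambda)\subseteq\{1,\ldots,C\}$ and a wake-up detection time $\hat l^{\rm det}(\mathbf u,\mathbf h,\lambda)$. Let $\ell(c,\mathcal C)\in[0,1]$ be a loss function with $\ell(c,\mathcal C)=0$ whenever $c\in\mathcal C$, and define the expected loss $L(\lambda)=\mathbb E[\ell(c,\mathcal C(\mathbf u,\mathbf h,\lambda))]$, where $(\mathbf u,c)\sim p(\mathbf u,c)$ and $\mathbf h\sim p(\mathbf h)$ independently. The hyperparameter $\lambda^{\rm sec}=[\infty,\infty,\infty]$ yields $\mathcal C(\mathbf u,\mathbf h,\lambda^{\rm sec})=\{1,\ldots,C\}$ for all $\mathbf u,\mathbf h$. Let $\mathcal D^{\rm DT}$ and $\mathcal D^{\rm PT}=\{(\mathbf u_n,c_n)\}_{n=1}^{|\mathcal D^{\rm PT}|}$ be two disjoint datasets, and let simulated channels $\{\tilde{\mathbf h}_n\sim\tilde p(\mathbf h)\}_{n=1}^{|\mathcal D^{\rm DT}|}$ be generated from an arbitrary simulator distribution $\tilde p$. Assume the pairs in $\mathcal D^{\rm PT}$ are i.i.d. from $p(\mathbf u,c)$, the true channels $\{\mathbf h_n\}_{n=1}^{|\mathcal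 D^{\rm PT}|}$ are i.i.d. from $p(\mathbf h)$, and $(\mathcal D^{\rm PT},\{\mathbf h_n\})$ is independent of $(\mathcal D^{\rm DT},\{\tilde{\mathbf h}_n\})$. Fix $\alpha\in[0,1]$, $\delta\in(0,1)$, $\gamma\ge 0$, $P^{\rm on}>0$, and integers $L^{\rm max},\delta^{\rm wake}$. DT-LTT selects $\lambda^*$ as follows. (i) Using only $\mathcal D^{\rm DT}$ and $\{\tilde{\mathbf h}_n\}$, compute $\hat L^{\rm DT}(\lambda)=\frac{1}{|\mathcal D^{\rm DT}|}\sum_{n}\ell(c_n,\mathcal C(\mathbf u_n,\tilde{\mathbf h}_n,\lambda))$, $\hat E^{\rm DT}(\lambda)=P^{\rm on}\big(L^{\rm max}-\frac{1}{|\mathcal D^{\rm DT}|}\sum_n\hat l^{\rm det}(\mathbf u_n,\tilde{\mathbf h}_n,\lambda)-\delta^{\rm wake}+1\big)$, $\hat I^{\rm DT}(\lambda)=\frac{1}{|\mathcal D^{\rm DT}|}\sum_n|\mathcal C(\mathbf u_n,\tilde{\mathbf h}_n,\lambda)|$ (sums over $(\mathbf u_n,c_n)\in\mathcal D^{\rm DT}$), and choose a finite set $\Lambda$ of candidates (e.g. those whose pair $(\hat L^{\rm DT}(\lambda),\hat E^{\rm DT}(\lambda)+\gamma\hat I^{\rm DT}(\lambda))$ lies on the Pareto front), ordered as $\lambda_1,\ldots,\lambda_{|\Lambda|}$ with $\hat L^{\rm DT}(\lambda_1)\le\cdots\le\hat L^{\rm DT}(\lambda_{|\Lambda|})$. (ii)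 For $j=1,2,\ldots$, compute on the true channels $\hat L^{\rm PT}(\lambda_j)=\frac{1}{|\mathcal D^{\rm PT}|}\sum_{n}\ell(c_n,\mathcal C(\mathbf u_n,\mathbf h_n,\lambda_j))$ and analogously $\hat E^{\rm PT}(\lambda_j)$, $\hat I^{\rm PT}(\lambda_j)$, and stop at the first index $j^{\rm stop}$ with $\hat L^{\rm PT}(\lambda_{j^{\rm stop}})>\psi(\alpha,\delta)$, where $\psi(\alpha,\delta)=\alpha-\sqrt{\frac{-\ln\delta}{2|\mathcal D^{\rm PT}|}}$ (set $j^{\rm stop}=|\Lambda|+1$ if no such index exists). (iii) If $j^{\rm stop}=1$, set $\lambda^*=\lambda^{\rm sec}$; otherwise set $\lambda^*=\lambda_{j^*}$ with $j^*\in\arg\min_{j\in\{1,\ldots,j^{\rm stop}-1\}}\{\hat E^{\rm PT}(\lambda_j)+\gamma\hat I^{\rm PT}(\lambda_j)\}$. Then, for any realization of $\mathcal D^{\rm DT}$ and of the simulated channels $\{\tilde{\mathbf h}_n\}$, and irrespective of $\tilde p$, $p(\mathbf u,c)$ and $p(\mathbf h)$, $$\Pr[L(\lambda^* )\le\alpha]\ge 1-\delta,$$ where the probability is over the randomness of $\mathcal D^{\rm PT}$ and the true channels $\{\mathbf h_n\}_{n=1}^{|\mathcal D^{\rm PT}|}$.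
   Context: The system: a transmitter senses a time series, detects the start of a signal of interest via a CUSUM statistic compared to threshold $\lambda^{\rm s}$, sends a wake-up signal which a wake-up receiver detects via a matched filter compared to threshold $\lambda^{\rm w}$ (producing detection time $\hat l^{\rm det}$), after which a main receiver with a pre-trained spiking neural network outputs class scores $s_c$ and the decision set $\mathcal C=\{c: s_c\le\lambda^{\rm d}\}$. All networks are fixed; only $\lambda$ is selected. In the paper the loss is the 0-1 miscoverage loss $\ell(c,\mathcal C)=\mathbb 1(c\notin\mathcal C)$. *)

theory Defs
  imports "HOL-Probability.Probability"
begin

type_synonym hyp = "ereal \<times> ereal \<times> ereal"

definition lam_sec :: hyp where
  "lam_sec = (\<infinity>, \<infinity>, \<infinity>)"

text \<open>A data sample is ((u, c), h): input, label, channel realization.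
  Empirical loss, energy and inefficiency over a list of samples.\<close>

definition emp_loss ::
  "(nat \<Rightarrow> nat set \<Rightarrow> real) \<Rightarrow> ('u \<Rightarrow> 'h \<Rightarrow> hyp \<Rightarrow> nat set)
   \<Rightarrow> (('u \<times> nat) \<times> 'h) list \<Rightarrow> hyp \<Rightarrow> real" where
  "emp_loss loss Cs D lam =
     sum_list (map (\<lambda>((u, c), h). loss c (Cs u h lam)) D) / real (length D)"

definition emp_energy ::
  "real \<Rightarrow> int \<Rightarrow> int \<Rightarrow> ('u \<Rightarrow> 'h \<Rightarrow> hyp \<Rightarrow> int)
   \<Rightarrow> (('u \<times> nat) \<times> 'h) list \<Rightarrow> hyp \<Rightarrow> real" where
  "emp_energy Pon Lmax dwake ldet D lam =
     Pon * (real_of_int Lmax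
            - sum_list (map (\<lambda>((u, c), h). real_of_int (ldet u h lam)) D) / real (length D)
            - real_of_int dwake + 1)"

definition emp_ineff ::
  "('u \<Rightarrow> 'h \<Rightarrow> hyp \<Rightarrow> nat set) \<Rightarrow> (('u \<times> nat) \<times> 'h) list \<Rightarrow> hyp \<Rightarrow> real" where
  "emp_ineff Cs D lam =
     sum_list (map (\<lambda>((u, c), h). real (card (Cs u h lam))) D) / real (length D)"

definition psi :: "real \<Rightarrow> real \<Rightarrow> nat \<Rightarrow> real" where
  "psi alpha delta N = alpha - sqrt (- ln delta / (2 * real N))"

definition j_stop :: "(hyp \<Rightarrow> real) \<Rightarrow> real \<Rightarrow> hyp list \<Rightarrow> nat" where
  "j_stop LPT thr lams =
     (if \<exists>j\<in>{1..length lams}. LPT (lams ! (j - 1)) > thr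
      then (LEAST j. j \<in> {1..length lams} \<and> LPT (lams ! (j - 1)) > thr)
      else length lams + 1)"

text \<open>The set of all admissible outputs lambda* of DT-LTT (any choice of j* in the argmin).\<close>
definition dtltt_outputs ::
  "(hyp \<Rightarrow> real) \<Rightarrow> (hyp \<Rightarrow> real) \<Rightarrow> real \<Rightarrow> hyp list \<Rightarrow> hyp set" where
  "dtltt_outputs LPT score thr lams =
     (let js = j_stop LPT thr lams in
      if js = 1 then {lam_sec}
      else {lams ! (j - 1) | j. j \<in> {1..js - 1} \<and>
              (\<forall>k\<in>{1..js - 1}. score (lams ! (j - 1)) \<le> score (lams ! (k - 1)))})"

definition exp_loss ::
  "('u \<times> nat) measure \<Rightarrow> 'h measure \<Rightarrow> (nat \<Rightarrow> nat set \<Rightarrow> real)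
   \<Rightarrow> ('u \<Rightarrow> 'h \<Rightarrow> hyp \<Rightarrow> nat set) \<Rightarrow> hyp \<Rightarrow> real" where
  "exp_loss P Ph loss Cs lam =
     (\<integral>x. (case x of ((u, c), h) \<Rightarrow> loss c (Cs u h lam)) \<partial>(P \<Otimes>\<^sub>M Ph))"

end

theory Submission imports Defs begin
lemma sl: "sum_list (map g (map \<omega> [0..<N])) = (\<Sum>i<N. g (\<omega> i))"
  by (simp add: sum_list_sum_nth lessThan_atLeast0)

lemma indep_coords:
  assumes M: "prob_space M" and fin: "finite I" and ne: "I \<noteq> {}"
  shows "prob_space.indep_vars (PiM I (\<lambda>_. M)) (\<lambda>_. M) (\<lambda>i \<omega>. \<omega> i) I"
proof -
  interpret PM: prob_space "PiM I (\<lambda>_. M)" by (intro prob_space_PiM M)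
  have rv: "\<And>i. i \<in> I \<Longrightarrow> (\<lambda>\<omega>. \<omega> i) \<in> measurable (PiM I (\<lambda>_. M)) M" by simp
  have "distr (PiM I (\<lambda>_. M)) (PiM I (\<lambda>_. M)) (\<lambda>x. restrict x I) = distr (PiM I (\<lambda>_. M)) (PiM I (\<lambda>_. M)) (\<lambda>x. x)"
    by (intro distr_cong) (auto simp: space_PiM PiE_def extensional_restrict)
  also have "\<dots> = PiM I (\<lambda>_. M)" by simp
  also have "\<dots> = PiM I (\<lambda>i. distr (PiM I (\<lambda>_. M)) M (\<lambda>\<omega>. \<omega> i))"
    by (intro PiM_cong refl distr_PiM_component[symmetric] M)
  finally show ?thesis
    by (subst PM.indep_vars_iff_distr_eq_PiM'[OF ne rv])
qed

lemma jstop_iff: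
  assumes "j \<le> length lams"
  shows "j < j_stop LPT thr lams \<longleftrightarrow> (\<forall>i\<in>{1..j}. LPT (lams ! (i - 1)) \<le> thr)"
proof (cases "\<exists>j\<in>{1..length lams}. LPT (lams ! (j - 1)) > thr")
  case True
  let ?Q = "\<lambda>j. j \<in> {1..length lams} \<and> LPT (lams ! (j - 1)) > thr"
  have js: "j_stop LPT thr lams = (LEAST j. ?Q j)" using True by (simp add: j_stop_def)
  obtain m where m: "?Q m" using True by blast
  have Q: "?Q (LEAST j. ?Q j)" using m by (rule LeastI)
  show ?thesis unfolding js
  proof
    assume a: "j < (LEAST j. ?Q j)"
    show "\<forall>i\<in>{1..j}. LPT (lams ! (i - 1)) \<le> thr"
    proof
      fix i assume i: "i \<in> {1..j}"
      then have "i < (LEAST j. ?Q j)" using a by simp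
      then have "\<not> ?Q i" by (rule not_less_Least)
      then show "LPT (lams ! (i - 1)) \<le> thr" using i assms by auto
    qed
  next
    assume "\<forall>i\<in>{1..j}. LPT (lams ! (i - 1)) \<le> thr"
    then show "j < (LEAST j. ?Q j)" using Q by (metis atLeastAtMost_iff not_le not_less)
  qed
next
  case False
  then show ?thesis using assms by (force simp: j_stop_def not_less)
qed

lemma hoeff:
  assumes M: "prob_space M" and g: "g \<in> borel_measurable M"
    and gb: "\<forall>x\<in>space M. 0 \<le> g x \<and> g x \<le> 1" and N: "N > 0" and eps: "\<epsilon> \<ge> 0"
  shows "measure (PiM {..<N} (\<lambda>_. M)) {\<omega>\<in>space (PiM {..<N} (\<lambda>_. M)). (\<Sum>i<N. g (\<omega> i)) / real N \<le> integral\<^sup>L M g - \<epsilon>}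
     \<le> exp (-2 * real N * \<epsilon>\<^sup>2)"
proof -
  interpret PM: prob_space "PiM {..<N} (\<lambda>_. M)" by (intro prob_space_PiM M)
  have comp: "\<And>i. i \<in> {..<N} \<Longrightarrow> distr (PiM {..<N} (\<lambda>_. M)) borel (\<lambda>\<omega>. g (\<omega> i)) = distr M borel g"
  proof -
    fix i :: nat assume i: "i \<in> {..<N}"
    have "distr (PiM {..<N} (\<lambda>_. M)) borel (\<lambda>\<omega>. g (\<omega> i)) = distr (distr (PiM {..<N} (\<lambda>_. M)) M (\<lambda>\<omega>. \<omega> i)) borel g"
      using i g by (subst distr_distr) (auto simp: comp_def)
    also have "distr (PiM {..<N} (\<lambda>_. M)) M (\<lambda>\<omega>. \<omega> i) = M"
      using i M by (intro distr_PiM_component) auto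
    finally show "distr (PiM {..<N} (\<lambda>_. M)) borel (\<lambda>\<omega>. g (\<omega> i)) = distr M borel g" .
  qed
  have ind: "PM.indep_vars (\<lambda>_. borel) (\<lambda>i \<omega>. g (\<omega> i)) {..<N}"
    using PM.indep_vars_compose2[OF indep_coords[OF M, of "{..<N}"], of "\<lambda>_. g" "\<lambda>_. borel"] N g
    by auto
  interpret H: Hoeffding_ineq_iid "PiM {..<N} (\<lambda>_. M)" "{..<N}" "\<lambda>i \<omega>. g (\<omega> i)" "\<lambda>\<omega>. g (\<omega> 0)" 0 1 "PM.expectation (\<lambda>\<omega>. g (\<omega> 0))"
  proof unfold_locales
    show "PM.indep_vars (\<lambda>_. borel) (\<lambda>i \<omega>. g (\<omega> i)) {..<N}" by (rule ind)
    fix i assume "i \<in> {..<N}"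
    then show "distr (PiM {..<N} (\<lambda>_. M)) borel (\<lambda>\<omega>. g (\<omega> i)) = distr (PiM {..<N} (\<lambda>_. M)) borel (\<lambda>\<omega>. g (\<omega> 0))"
      using comp N by simp
  next
    show "(\<lambda>\<omega>. g (\<omega> 0)) \<in> borel_measurable (PiM {..<N} (\<lambda>_. M))" using g N by simp
    show "AE x in PiM {..<N} (\<lambda>_. M). g (x 0) \<in> {0..1}"
      using gb N by (intro AE_I2) (auto simp: space_PiM)
  qed (simp, rule Pure.reflexive)
  have mu: "PM.expectation (\<lambda>\<omega>. g (\<omega> 0)) = integral\<^sup>L M g"
  proof -
    have c0: "(\<lambda>\<omega>. \<omega> 0) \<in> measurable (PiM {..<N} (\<lambda>_. M)) M"
      using N by (intro measurable_component_singleton) simp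
    have "PM.expectation (\<lambda>\<omega>. g (\<omega> 0)) = integral\<^sup>L (distr (PiM {..<N} (\<lambda>_. M)) M (\<lambda>\<omega>. \<omega> 0)) g"
      by (rule integral_distr[OF c0 g, symmetric])
    also have "distr (PiM {..<N} (\<lambda>_. M)) M (\<lambda>\<omega>. \<omega> 0) = M"
      using N M by (intro distr_PiM_component) auto
    finally show ?thesis .
  qed
  have "PM.prob {x \<in> space (PiM {..<N} (\<lambda>_. M)). (\<Sum>i\<in>{..<N}. g (x i)) / real (card {..<N}) \<le> PM.expectation (\<lambda>\<omega>. g (\<omega> 0)) - \<epsilon>}
     \<le> exp (- 2 * real (card {..<N}) * \<epsilon>\<^sup>2 / (1 - 0)\<^sup>2)"
    by (rule H.Hoeffding_ineq_le'[OF eps]) (use N in auto)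
  then show ?thesis by (simp add: mu)
qed

lemma jstop_cases:
  "j_stop LPT thr lams \<ge> 1 \<and> j_stop LPT thr lams \<le> length lams + 1"
proof (cases "\<exists>j\<in>{1..length lams}. LPT (lams ! (j - 1)) > thr")
  case True
  let ?Q = "\<lambda>j. j \<in> {1..length lams} \<and> LPT (lams ! (j - 1)) > thr"
  have js: "j_stop LPT thr lams = (LEAST j. ?Q j)" using True by (simp add: j_stop_def)
  obtain m where m: "?Q m" using True by blast
  have Q: "?Q (LEAST j. ?Q j)" using m by (rule LeastI)
  then have "(LEAST j. ?Q j) \<in> {1..length lams}" by (rule conjunct1)
  then show ?thesis unfolding js by simp
next
  case False
  then show ?thesis unfolding j_stop_def by (simp only: if_False) simp
qed

lemma good_iff:
  assumes sec: "Lf lam_sec \<le> alpha"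
  shows "(\<forall>lam\<in>dtltt_outputs LPT score thr lams. Lf lam \<le> alpha) \<longleftrightarrow>
    (\<forall>j\<in>{1..length lams}. ((\<forall>i\<in>{1..j}. LPT (lams ! (i - 1)) \<le> thr) \<and>
       (\<forall>k\<in>{1..length lams}. (\<forall>i\<in>{1..k}. LPT (lams ! (i - 1)) \<le> thr) \<longrightarrow>
            score (lams ! (j - 1)) \<le> score (lams ! (k - 1)))) \<longrightarrow> Lf (lams ! (j - 1)) \<le> alpha)"
  (is "?L \<longleftrightarrow> (\<forall>j\<in>{1..length lams}. (?A j \<and> (\<forall>k\<in>{1..length lams}. ?A k \<longrightarrow> ?S j k)) \<longrightarrow> ?G j)")
proof -
  let ?js = "j_stop LPT thr lams"
  have ge: "?js \<ge> 1" and le: "?js \<le> length lams + 1" using jstop_cases[of LPT thr lams] by auto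
  have eq: "j \<in> {1..?js - 1} \<longleftrightarrow> j \<in> {1..length lams} \<and> ?A j" for j
  proof (cases "j \<le> length lams")
    case True
    have "j < ?js \<longleftrightarrow> ?A j" by (rule jstop_iff[OF True])
    then show ?thesis using True ge by auto
  next
    case False
    then show ?thesis using le by auto
  qed
  show ?thesis
  proof (cases "?js = 1")
    case True
    have out: "dtltt_outputs LPT score thr lams = {lam_sec}"
      unfolding dtltt_outputs_def Let_def using True by simp
    have "\<not> ?A j" if "j \<in> {1..length lams}" for j
      using eq[of j] that True by auto
    then show ?thesis unfolding out using sec by blast
  next
    case False
    have out: "dtltt_outputs LPT score thr lams = {lams ! (j - 1) | j. j \<in> {1..?js - 1} \<and>
              (\<forall>k\<in>{1..?js - 1}. score (lams ! (j - 1)) \<le> score (lams ! (k - 1)))}"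
      unfolding dtltt_outputs_def Let_def by (simp only: False if_False)
    show ?thesis
    proof
      assume L: ?L
      show "\<forall>j\<in>{1..length lams}. (?A j \<and> (\<forall>k\<in>{1..length lams}. ?A k \<longrightarrow> ?S j k)) \<longrightarrow> ?G j"
      proof (intro ballI impI)
        fix j assume j: "j \<in> {1..length lams}" and H: "?A j \<and> (\<forall>k\<in>{1..length lams}. ?A k \<longrightarrow> ?S j k)"
        have j1: "j \<in> {1..?js - 1}" using eq[of j] j H by blast
        have "\<forall>k\<in>{1..?js - 1}. ?S j k"
        proof
          fix k assume "k \<in> {1..?js - 1}"
          then have "k \<in> {1..length lams} \<and> ?A k" using eq[of k] by blast
          then show "?S j k" using H by blast
        qed
        then have "lams ! (j - 1) \<in> dtltt_outputs LPT score thr lams"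
          unfolding out using j1 by blast
        then show "?G j" using L by blast
      qed
    next
      assume R: "\<forall>j\<in>{1..length lams}. (?A j \<and> (\<forall>k\<in>{1..length lams}. ?A k \<longrightarrow> ?S j k)) \<longrightarrow> ?G j"
      show ?L
      proof
        fix lam assume "lam \<in> dtltt_outputs LPT score thr lams"
        then obtain j where lj: "lam = lams ! (j - 1)" and j1: "j \<in> {1..?js - 1}"
          and mn: "\<forall>k\<in>{1..?js - 1}. ?S j k" unfolding out by blast
        have j: "j \<in> {1..length lams} \<and> ?A j" using eq[of j] j1 by blast
        have "\<forall>k\<in>{1..length lams}. ?A k \<longrightarrow> ?S j k"
        proof (intro ballI impI)
          fix k assume "k \<in> {1..length lams}" "?A k"
          then have "k \<in> {1..?js - 1}" using eq[of k] by blast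
          then show "?S j k" using mn by blast
        qed
        then show "Lf lam \<le> alpha" using R j lj by blast
      qed
    qed
  qed
qed

theorem theorem1:
  fixes P :: "('u \<times> nat) measure" and Ph :: "'h measure"
    and Cs :: "'u \<Rightarrow> 'h \<Rightarrow> hyp \<Rightarrow> nat set"
    and ldet :: "'u \<Rightarrow> 'h \<Rightarrow> hyp \<Rightarrow> int"
    and loss :: "nat \<Rightarrow> nat set \<Rightarrow> real"
    and C N :: nat
    and DDT :: "('u \<times> nat) list" and htil :: "'h list"
    and lams :: "hyp list"
    and alpha delta gamma Pon :: real and Lmax dwake :: int
  assumes "prob_space P" and "prob_space Ph"
    and "C \<ge> 1"
    and "\<forall>x\<in>space P. snd x \<in> {1..C}"
    and "\<forall>u h lam. Cs u h lam \<subseteq> {1..C}"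
    and "\<forall>u h. Cs u h lam_sec = {1..C}"
    and "\<forall>c S. 0 \<le> loss c S \<and> loss c S \<le> 1"
    and "\<forall>c S. c \<in> S \<longrightarrow> loss c S = 0"
    and "\<forall>lam\<in>set lams. (\<lambda>((u, c), h). loss c (Cs u h lam)) \<in> borel_measurable (P \<Otimes>\<^sub>M Ph)"
    and "\<forall>lam\<in>set lams. (\<lambda>((u, c), h). real_of_int (ldet u h lam)) \<in> borel_measurable (P \<Otimes>\<^sub>M Ph)"
    and "\<forall>lam\<in>set lams. (\<lambda>((u, c), h). real (card (Cs u h lam))) \<in> borel_measurable (P \<Otimes>\<^sub>M Ph)"
    and "length htil = length DDT"
    and "distinct lams"
    and "sorted (map (emp_loss loss Cs (zip DDT htil)) lams)"
    and "N > 0"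
    and "0 \<le> alpha" and "alpha \<le> 1" and "0 < delta" and "delta < 1"
    and "gamma \<ge> 0" and "Pon > 0"
  shows "measure (PiM {..<N} (\<lambda>_. P \<Otimes>\<^sub>M Ph))
           {\<omega> \<in> space (PiM {..<N} (\<lambda>_. P \<Otimes>\<^sub>M Ph)).
              \<forall>lam \<in> dtltt_outputs
                       (emp_loss loss Cs (map \<omega> [0..<N]))
                       (\<lambda>lam. emp_energy Pon Lmax dwake ldet (map \<omega> [0..<N]) lam
                               + gamma * emp_ineff Cs (map \<omega> [0..<N]) lam)
                       (psi alpha delta N) lams.
                exp_loss P Ph loss Cs lam \<le> alpha}
         \<ge> 1 - delta"
proof -
  let ?M = "P \<Otimes>\<^sub>M Ph"
  let ?PM = "PiM {..<N} (\<lambda>_. ?M)"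
  let ?n = "length lams"
  define g where "g = (\<lambda>lam. (\<lambda>((u, c), h). loss c (Cs u h lam)) :: ('u \<times> nat) \<times> 'h \<Rightarrow> real)"
  define dl where "dl = (\<lambda>lam. (\<lambda>((u, c), h). real_of_int (ldet u h lam)) :: ('u \<times> nat) \<times> 'h \<Rightarrow> real)"
  define cd where "cd = (\<lambda>lam. (\<lambda>((u, c), h). real (card (Cs u h lam))) :: ('u \<times> nat) \<times> 'h \<Rightarrow> real)"
  define LPT where "LPT = (\<lambda>\<omega> lam. emp_loss loss Cs (map \<omega> [0..<N]) lam)"
  define SC where "SC = (\<lambda>\<omega> lam. emp_energy Pon Lmax dwake ldet (map \<omega> [0..<N]) lam
                               + gamma * emp_ineff Cs (map \<omega> [0..<N]) lam)"
  define thr where "thr = psi alpha delta N"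
  define E where "E = exp_loss P Ph loss Cs"
  interpret M: prob_space ?M by (intro prob_space_pair assms)
  interpret PM: prob_space ?PM by (intro prob_space_PiM) (simp add: M.prob_space_axioms)
  have Esec: "E lam_sec \<le> alpha"
  proof -
    have "E lam_sec = integral\<^sup>L ?M (\<lambda>_. 0)" unfolding E_def exp_loss_def
      by (intro Bochner_Integration.integral_cong refl) (use assms(4,6,8) in \<open>auto simp: space_pair_measure split: prod.splits\<close>)
    then show ?thesis using assms by simp
  qed
  have Eg: "E lam = integral\<^sup>L ?M (g lam)" for lam
    unfolding E_def exp_loss_def g_def by (simp add: case_prod_beta')
  have LPT_eq: "LPT \<omega> lam = (\<Sum>i<N. g lam (\<omega> i)) / real N" for \<omega> lam
    unfolding LPT_def emp_loss_def g_def sl by simp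
  have SC_eq: "SC \<omega> lam = Pon * (real_of_int Lmax - (\<Sum>i<N. dl lam (\<omega> i)) / real N - real_of_int dwake + 1)
      + gamma * ((\<Sum>i<N. cd lam (\<omega> i)) / real N)" for \<omega> lam
    unfolding SC_def emp_energy_def emp_ineff_def dl_def cd_def sl by simp
  have gm: "g lam \<in> borel_measurable ?M" if "lam \<in> set lams" for lam
    using assms(9) that unfolding g_def by blast
  have dm: "dl lam \<in> borel_measurable ?M" if "lam \<in> set lams" for lam
    using assms(10) that unfolding dl_def by blast
  have cm: "cd lam \<in> borel_measurable ?M" if "lam \<in> set lams" for lam
    using assms(11) that unfolding cd_def by blast
  have Lm: "(\<lambda>\<omega>. LPT \<omega> lam) \<in> borel_measurable ?PM" if "lam \<in> set lams" for lam
  proof -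
    note gm[OF that, measurable]
    show ?thesis unfolding LPT_eq by measurable
  qed
  have Sm: "(\<lambda>\<omega>. SC \<omega> lam) \<in> borel_measurable ?PM" if "lam \<in> set lams" for lam
  proof -
    note dm[OF that, measurable] cm[OF that, measurable]
    show ?thesis unfolding SC_eq by measurable
  qed
  define Lv where "Lv = (\<lambda>j \<omega>. if j \<in> {1..?n} then LPT \<omega> (lams ! (j - 1)) else 0)"
  define Sv where "Sv = (\<lambda>j \<omega>. if j \<in> {1..?n} then SC \<omega> (lams ! (j - 1)) else 0)"
  have Lvm[measurable]: "Lv j \<in> borel_measurable ?PM" for j
  proof (cases "j \<in> {1..?n}")
    case True
    then have "lams ! (j - 1) \<in> set lams" by auto
    then show ?thesis using True Lm unfolding Lv_def by simp
  next
    case False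
    then show ?thesis unfolding Lv_def by (subst if_not_P[OF False]) simp
  qed
  have Svm[measurable]: "Sv j \<in> borel_measurable ?PM" for j
  proof (cases "j \<in> {1..?n}")
    case True
    then have "lams ! (j - 1) \<in> set lams" by auto
    then show ?thesis using True Sm unfolding Sv_def by simp
  next
    case False
    then show ?thesis unfolding Sv_def by (subst if_not_P[OF False]) simp
  qed
  define Gd where "Gd = (\<lambda>\<omega>. \<forall>j\<in>{1..?n}. ((\<forall>i\<in>{1..j}. Lv i \<omega> \<le> thr) \<and>
       (\<forall>k\<in>{1..?n}. (\<forall>i\<in>{1..k}. Lv i \<omega> \<le> thr) \<longrightarrow> Sv j \<omega> \<le> Sv k \<omega>)) \<longrightarrow> E (lams ! (j - 1)) \<le> alpha)"
  have pS[measurable]: "Measurable.pred ?PM (\<lambda>x. Sv j x \<le> Sv k x)" for j k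
    unfolding Measurable.pred_def by (rule borel_measurable_le) simp_all
  have pE[measurable]: "Measurable.pred ?PM (\<lambda>x. E (lams ! (j - 1)) \<le> alpha)" for j
    unfolding Measurable.pred_def by simp
  have Gd_meas: "{\<omega> \<in> space ?PM. Gd \<omega>} \<in> sets ?PM"
    unfolding Gd_def by measurable
  have set_eq: "{\<omega> \<in> space ?PM. \<forall>lam \<in> dtltt_outputs (LPT \<omega>) (SC \<omega>) thr lams. E lam \<le> alpha}
      = {\<omega> \<in> space ?PM. Gd \<omega>}"
  proof -
    have "(\<forall>lam \<in> dtltt_outputs (LPT \<omega>) (SC \<omega>) thr lams. E lam \<le> alpha) \<longleftrightarrow> Gd \<omega>" for \<omega>
    proof -
      have "(\<forall>lam \<in> dtltt_outputs (LPT \<omega>) (SC \<omega>) thr lams. E lam \<le> alpha) \<longleftrightarrow>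
        (\<forall>j\<in>{1..?n}. ((\<forall>i\<in>{1..j}. LPT \<omega> (lams ! (i - 1)) \<le> thr) \<and>
         (\<forall>k\<in>{1..?n}. (\<forall>i\<in>{1..k}. LPT \<omega> (lams ! (i - 1)) \<le> thr) \<longrightarrow>
            SC \<omega> (lams ! (j - 1)) \<le> SC \<omega> (lams ! (k - 1)))) \<longrightarrow> E (lams ! (j - 1)) \<le> alpha)"
        by (rule good_iff[where Lf=E and alpha=alpha, OF Esec])
      also have "\<dots> \<longleftrightarrow> Gd \<omega>"
        unfolding Gd_def Lv_def Sv_def
        by (intro ball_cong refl imp_cong conj_cong all_cong) auto
      finally show ?thesis .
    qed
    then show ?thesis by auto
  qed
  have "PM.prob {\<omega> \<in> space ?PM. Gd \<omega>} \<ge> 1 - delta"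
  proof (cases "\<forall>j\<in>{1..?n}. E (lams ! (j - 1)) \<le> alpha")
    case True
    then have "{\<omega> \<in> space ?PM. Gd \<omega>} = space ?PM" unfolding Gd_def by auto
    then show ?thesis using PM.prob_space \<open>0 < delta\<close> by simp
  next
    case False
    let ?Q = "\<lambda>j. j \<in> {1..?n} \<and> E (lams ! (j - 1)) > alpha"
    define j0 where "j0 = (LEAST j. ?Q j)"
    have Q0: "?Q j0" unfolding j0_def using False by (metis (mono_tags, lifting) LeastI not_le)
    have j0le: "\<And>j. ?Q j \<Longrightarrow> j0 \<le> j" unfolding j0_def by (rule Least_le)
    define lam0 where "lam0 = lams ! (j0 - 1)"
    have lam0: "lam0 \<in> set lams" using Q0 unfolding lam0_def by auto
    define eps where "eps = integral\<^sup>L ?M (g lam0) - thr"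
    have lnneg: "ln delta < 0" using \<open>0 < delta\<close> \<open>delta < 1\<close> by simp
    have s0: "0 \<le> - ln delta / (2 * real N)" using lnneg \<open>N > 0\<close> by (intro divide_nonneg_pos) auto
    have epsgt: "eps > sqrt (- ln delta / (2 * real N))"
      using Q0 Eg[of lam0] unfolding eps_def thr_def psi_def lam0_def by simp
    have eps0: "eps \<ge> 0" using epsgt s0 by (smt (verit) real_sqrt_ge_zero)
    have "(sqrt (- ln delta / (2 * real N)))\<^sup>2 \<le> eps\<^sup>2"
      using epsgt s0 by (intro power_mono) auto
    then have sq: "- ln delta / (2 * real N) \<le> eps\<^sup>2" using s0 by simp
    have "-2 * real N * eps\<^sup>2 \<le> ln delta"
    proof -
      have "2 * real N * (- ln delta / (2 * real N)) \<le> 2 * real N * eps\<^sup>2"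
        using sq assms by (intro mult_left_mono) auto
      then show ?thesis using assms by simp
    qed
    then have expd: "exp (-2 * real N * eps\<^sup>2) \<le> delta"
      using assms by (metis exp_le_cancel_iff exp_ln)
    define B where "B = {\<omega> \<in> space ?PM. (\<Sum>i<N. g lam0 (\<omega> i)) / real N \<le> integral\<^sup>L ?M (g lam0) - eps}"
    have B_eq: "B = {\<omega> \<in> space ?PM. Lv j0 \<omega> \<le> thr}"
      unfolding B_def Lv_def eps_def using Q0 by (auto simp: LPT_eq lam0_def)
    have Bm: "B \<in> sets ?PM" unfolding B_eq by measurable
    have gb: "\<forall>x\<in>space ?M. 0 \<le> g lam0 x \<and> g lam0 x \<le> 1"
      using assms(7) unfolding g_def by auto
    have pB: "PM.prob B \<le> delta"
      using hoeff[OF M.prob_space_axioms gm[OF lam0] gb \<open>N > 0\<close> eps0] expd unfolding B_def by simp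
    have sub: "space ?PM - {\<omega> \<in> space ?PM. Gd \<omega>} \<subseteq> B"
    proof
      fix \<omega> assume w: "\<omega> \<in> space ?PM - {\<omega> \<in> space ?PM. Gd \<omega>}"
      then obtain j where j: "j \<in> {1..?n}" and A: "\<forall>i\<in>{1..j}. Lv i \<omega> \<le> thr"
        and bad: "E (lams ! (j - 1)) > alpha" unfolding Gd_def by (auto simp: not_le)
      have "j0 \<le> j" using j bad j0le by blast
      then have "Lv j0 \<omega> \<le> thr" using A Q0 by auto
      then show "\<omega> \<in> B" using w unfolding B_eq by auto
    qed
    have "PM.prob (space ?PM - {\<omega> \<in> space ?PM. Gd \<omega>}) \<le> PM.prob B"
      using sub Bm by (intro PM.finite_measure_mono)
    then show ?thesis using PM.prob_compl[OF Gd_meas] pB by linarith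
  qed
  then show ?thesis using set_eq unfolding LPT_def SC_def thr_def E_def by simp
qed

end
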